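(* Let $e_1,\dots,e_n>0$ with $\sum_ie_i=1$ and fix the reported demands of all agents other than $i$. Let $a_i$ and $a_i'$ be agent $i$'s MMF allocations when she reports $d_i$ and $d_i'$ respectively. If $d_i<d_i'$, then $a_i\le a_i'$, with equality only when agent $i$ is allocated in the saturating step (rather than being allocated her reported demand) under both reports.
   Context: MMF$(e,d)$: set $r=1$, $E=1$, $S=\{1,\dots,n\}$, $a=0$; process agents $j$ in ascending order of $d_j/e_j$; if $d_j<re_j/E$, set $a_j=d_j$ (agent $j$ is "allocated her reported demand"), remove $j$ from $S$, $r\leftarrow r-d_j$, $E\leftarrow E-e_j$ and continue; otherwise (the "saturating step") set $a_k=re_k/E$ for all $k\in S$ and stop; output $a$. *)

theory Defs
  imports Complex_Main
begin

(* Agents are 0..<n; e j = endowment, d j = reported demand.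
   The MMF procedure processes a list of agents in order, with
   remaining resource r and remaining endowment E. *)

fun mmf_aux :: "(nat \<Rightarrow> real) \<Rightarrow> (nat \<Rightarrow> real) \<Rightarrow> nat list \<Rightarrow> real \<Rightarrow> real \<Rightarrow> (nat \<Rightarrow> real)" where
  "mmf_aux e d [] r E = (\<lambda>_. 0)"
| "mmf_aux e d (j # js) r E =
     (if d j < r * e j / E
      then (mmf_aux e d js (r - d j) (E - e j))(j := d j)
      else (\<lambda>k. if k \<in> set (j # js) then r * e k / E else 0))"

fun mmf_sat_aux :: "(nat \<Rightarrow> real) \<Rightarrow> (nat \<Rightarrow> real) \<Rightarrow> nat list \<Rightarrow> real \<Rightarrow> real \<Rightarrow> nat set" where
  "mmf_sat_aux e d [] r E = {}"
| "mmf_sat_aux e d (j # js) r E =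
     (if d j < r * e j / E
      then mmf_sat_aux e d js (r - d j) (E - e j)
      else set (j # js))"

(* processing order: ascending d_j/e_j, ties broken by index (sort_key is stable) *)
definition mmf_order :: "nat \<Rightarrow> (nat \<Rightarrow> real) \<Rightarrow> (nat \<Rightarrow> real) \<Rightarrow> nat list" where
  "mmf_order n e d = sort_key (\<lambda>j. d j / e j) [0..<n]"

definition MMF :: "nat \<Rightarrow> (nat \<Rightarrow> real) \<Rightarrow> (nat \<Rightarrow> real) \<Rightarrow> (nat \<Rightarrow> real)" where
  "MMF n e d = mmf_aux e d (mmf_order n e d) 1 1"

definition MMF_saturated :: "nat \<Rightarrow> (nat \<Rightarrow> real) \<Rightarrow> (nat \<Rightarrow> real) \<Rightarrow> nat set" where
  "MMF_saturated n e d = mmf_sat_aux e d (mmf_order n e d) 1 1"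

end

theory Submission
  imports Defs
begin

lemma mem_le_sum_list_real:
  fixes f :: "nat \<Rightarrow> real"
  assumes "\<forall>k\<in>set xs. f k \<ge> 0" "x \<in> set xs"
  shows "f x \<le> sum_list (map f xs)"
  using assms
proof (induction xs)
  case Nil then show ?case by simp
next
  case (Cons y ys)
  have "sum_list (map f ys) \<ge> 0" using Cons.prems(1) by (intro sum_list_nonneg) auto
  then show ?case using Cons by auto
qed

lemma mmf_char:
  assumes "sorted (map (\<lambda>k. d k / e k) L)" "\<forall>k\<in>set L. e k > 0" "\<forall>k\<in>set L. d k \<ge> 0"
    "E = sum_list (map e L)" "r > 0"
  shows "(sum_list (map d L) < r \<and> (\<forall>k\<in>set L. mmf_aux e d L r E k = d k) \<and> mmf_sat_aux e d L r E = {})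
    \<or> (\<exists>l. r / E \<le> l \<and> (\<forall>k\<in>set L. mmf_aux e d L r E k = min (d k) (l * e k))
        \<and> sum_list (map (\<lambda>k. min (d k) (l * e k)) L) = r
        \<and> mmf_sat_aux e d L r E = {k\<in>set L. l * e k \<le> d k} \<and> (\<exists>k\<in>set L. l * e k \<le> d k))"
  using assms
proof (induction L arbitrary: r E)
  case Nil
  then show ?case by simp
next
  case (Cons j js)
  have ej: "e j > 0" using Cons.prems by simp
  have nn: "sum_list (map e js) \<ge> 0"
    using Cons.prems(2) by (intro sum_list_nonneg) (auto intro: less_imp_le)
  have EE: "E = e j + sum_list (map e js)" using Cons.prems by simp
  have Epos: "E > 0" using ej nn EE by linarith
  have srt: "sorted (map (\<lambda>k. d k / e k) js)" and le: "\<forall>k\<in>set js. d j / e j \<le> d k / e k"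
    using Cons.prems(1) by auto
  show ?case
  proof (cases "d j < r * e j / E")
    case True
    have "e j / E \<le> 1" using ej Epos EE nn by (simp add: divide_le_eq_1)
    hence "r * e j / E \<le> r" using Cons.prems(5)
      by (metis mult_left_le times_divide_eq_right less_imp_le)
    hence rp: "r - d j > 0" using True by linarith
    have E': "E - e j = sum_list (map e js)" using EE by simp
    have "\<forall>k\<in>set js. e k > 0" "\<forall>k\<in>set js. d k \<ge> 0" using Cons.prems by auto
    note IH = Cons.IH[OF srt this E' rp]
    from IH show ?thesis
    proof
      assume A: "sum_list (map d js) < r - d j \<and> (\<forall>k\<in>set js. mmf_aux e d js (r - d j) (E - e j) k = d k)
         \<and> mmf_sat_aux e d js (r - d j) (E - e j) = {}"
      show ?thesis apply (rule disjI1) using A True by auto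
    next
      assume "\<exists>l. (r - d j) / (E - e j) \<le> l \<and> (\<forall>k\<in>set js. mmf_aux e d js (r - d j) (E - e j) k = min (d k) (l * e k))
        \<and> sum_list (map (\<lambda>k. min (d k) (l * e k)) js) = r - d j
        \<and> mmf_sat_aux e d js (r - d j) (E - e j) = {k\<in>set js. l * e k \<le> d k} \<and> (\<exists>k\<in>set js. l * e k \<le> d k)"
      then obtain l where l1: "(r - d j) / (E - e j) \<le> l"
        and l2: "\<forall>k\<in>set js. mmf_aux e d js (r - d j) (E - e j) k = min (d k) (l * e k)"
        and l3: "sum_list (map (\<lambda>k. min (d k) (l * e k)) js) = r - d j"
        and l4: "mmf_sat_aux e d js (r - d j) (E - e j) = {k\<in>set js. l * e k \<le> d k}"
        and l5: "\<exists>k\<in>set js. l * e k \<le> d k" by blast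
      from l5 obtain k0 where "k0 \<in> set js" by blast
      hence "e k0 \<le> sum_list (map e js)"
        using Cons.prems(2) by (intro mem_le_sum_list_real) auto
      hence E'p: "E - e j > 0" using E' Cons.prems(2) \<open>k0 \<in> set js\<close> by force
      have "d j * E < r * e j" using True Epos by (simp add: pos_less_divide_eq mult.commute)
      hence "r / E < (r - d j) / (E - e j)" using Epos E'p
        by (simp add: divide_less_eq less_divide_eq algebra_simps)
      hence rl: "r / E \<le> l" using l1 by linarith
      have "d j < l * e j"
      proof -
        have "d j < r / E * e j" using True by simp
        also have "\<dots> \<le> l * e j" using rl ej mult_right_mono[of "r / E" l "e j"] by simp
        finally show ?thesis .
      qed
      hence mj: "min (d j) (l * e j) = d j" by simp
      show ?thesis
        apply (rule disjI2, rule exI[of _ l])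
        using True rl l2 l3 l4 l5 mj \<open>d j < l * e j\<close> by auto
    qed
  next
    case False
    have rE: "r / E \<le> d k / e k" if "k \<in> set (j # js)" for k
    proof -
      have "r / E \<le> d j / e j" using False ej Epos
        by (simp add: le_divide_eq mult.commute)
      thus ?thesis using that le by force
    qed
    have rE2: "r / E * e k \<le> d k" if "k \<in> set (j # js)" for k
    proof -
      have "e k > 0" using Cons.prems(2) that by blast
      thus ?thesis using rE[OF that] by (simp add: le_divide_eq)
    qed
    have "sum_list (map (\<lambda>k. min (d k) (r / E * e k)) (j # js)) = sum_list (map (\<lambda>k. r / E * e k) (j # js))"
      by (rule arg_cong[where f=sum_list], rule map_cong) (use rE2 in auto)
    also have "\<dots> = r / E * sum_list (map e (j # js))" by (rule sum_list_const_mult)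
    also have "\<dots> = r / E * E" using Cons.prems(4) by simp
    also have "\<dots> = r" using Epos by simp
    finally have s: "sum_list (map (\<lambda>k. min (d k) (r / E * e k)) (j # js)) = r" .
    show ?thesis
      apply (rule disjI2, rule exI[of _ "r / E"])
      using False rE2 s by auto
  qed
qed

lemma MMF_char:
  fixes D e :: "nat \<Rightarrow> real"
  assumes e_pos: "\<And>j. j < n \<Longrightarrow> e j > 0"
    and e_sum: "(\<Sum>j<n. e j) = 1"
    and D_nn: "\<And>k. k < n \<Longrightarrow> D k \<ge> 0"
  shows "((\<Sum>k<n. D k) < 1 \<and> (\<forall>k<n. MMF n e D k = D k) \<and> MMF_saturated n e D = {})
    \<or> (\<exists>l. (\<forall>k<n. MMF n e D k = min (D k) (l * e k))
        \<and> (\<Sum>k<n. min (D k) (l * e k)) = 1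
        \<and> MMF_saturated n e D = {k. k < n \<and> l * e k \<le> D k} \<and> (\<exists>k<n. l * e k \<le> D k))"
proof -
  define L where "L = mmf_order n e D"
  have setL: "set L = {..<n}" unfolding L_def mmf_order_def by auto
  have dL: "distinct L" unfolding L_def mmf_order_def by simp
  have conv: "sum_list (map f L) = (\<Sum>k<n. f k)" for f :: "nat \<Rightarrow> real"
    using sum_list_distinct_conv_sum_set[OF dL, of f] setL by simp
  have srt: "sorted (map (\<lambda>k. D k / e k) L)" unfolding L_def mmf_order_def
    by (rule sorted_sort_key)
  have "\<forall>k\<in>set L. e k > 0" "\<forall>k\<in>set L. D k \<ge> 0" using setL e_pos D_nn by auto
  note C = mmf_char[OF srt this, of 1 1]
  have "1 = sum_list (map e L)" using conv e_sum by simp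
  note C = C[OF this]
  have M: "MMF n e D = mmf_aux e D L 1 1" "MMF_saturated n e D = mmf_sat_aux e D L 1 1"
    unfolding MMF_def MMF_saturated_def L_def by auto
  show ?thesis using C unfolding M conv setL by auto
qed

lemma F_mono:
  fixes D e :: "nat \<Rightarrow> real"
  assumes e_pos: "\<And>j. j < n \<Longrightarrow> e j > 0" and "m \<le> l"
  shows "(\<Sum>k<n. min (D k) (m * e k)) \<le> (\<Sum>k<n. min (D k) (l * e k))"
proof (rule sum_mono)
  fix k assume "k \<in> {..<n}"
  hence "m * e k \<le> l * e k" using e_pos assms(2) by (simp add: mult_right_mono less_imp_le)
  thus "min (D k) (m * e k) \<le> min (D k) (l * e k)" by linarith
qed

lemma F_strict:
  fixes D e :: "nat \<Rightarrow> real"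
  assumes e_pos: "\<And>j. j < n \<Longrightarrow> e j > 0" and "m < l" and "k0 < n" "l * e k0 \<le> D k0"
  shows "(\<Sum>k<n. min (D k) (m * e k)) < (\<Sum>k<n. min (D k) (l * e k))"
proof (rule sum_strict_mono_ex1)
  show "finite {..<n}" by simp
  show "\<forall>k\<in>{..<n}. min (D k) (m * e k) \<le> min (D k) (l * e k)"
  proof
    fix k assume "k \<in> {..<n}"
    hence "m * e k \<le> l * e k" using e_pos assms(2) by (simp add: mult_right_mono less_imp_le)
    thus "min (D k) (m * e k) \<le> min (D k) (l * e k)" by linarith
  qed
  have "m * e k0 < l * e k0" using e_pos[OF assms(3)] assms(2) by simp
  thus "\<exists>k\<in>{..<n}. min (D k) (m * e k) < min (D k) (l * e k)"
    using assms(3,4) by (intro bexI[of _ k0]) auto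
qed

theorem mainTheorem16:
  fixes n i :: nat and e d :: "nat \<Rightarrow> real" and di di' :: real
  assumes e_pos: "\<And>j. j < n \<Longrightarrow> e j > 0"
    and e_sum: "(\<Sum>j<n. e j) = 1"
    and d_nonneg: "\<And>j. j < n \<Longrightarrow> j \<noteq> i \<Longrightarrow> d j \<ge> 0"
    and i: "i < n"
    and di_nonneg: "0 \<le> di"
    and lt: "di < di'"
  shows "MMF n e (d(i := di)) i \<le> MMF n e (d(i := di')) i
       \<and> (MMF n e (d(i := di)) i = MMF n e (d(i := di')) i
            \<longrightarrow> i \<in> MMF_saturated n e (d(i := di)) \<and> i \<in> MMF_saturated n e (d(i := di')))"
proof -
  define D where "D = d(i := di)"
  define D' where "D' = d(i := di')"
  define F where "F = (\<lambda>X m. \<Sum>k<n. min ((X::nat \<Rightarrow> real) k) (m * e k))"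
  have Di: "D i = di" "D' i = di'" unfolding D_def D'_def by auto
  have Do: "D k = D' k" if "k \<noteq> i" for k using that unfolding D_def D'_def by auto
  have Dnn: "\<And>k. k < n \<Longrightarrow> D k \<ge> 0" using d_nonneg di_nonneg unfolding D_def by auto
  have D'nn: "\<And>k. k < n \<Longrightarrow> D' k \<ge> 0" using d_nonneg di_nonneg lt unfolding D'_def by auto
  note C = MMF_char[of n e D, OF e_pos e_sum Dnn]
  note C' = MMF_char[of n e D', OF e_pos e_sum D'nn]
  have FD: "F D m = F D' m" if "m * e i \<le> di" for m
    unfolding F_def
  proof (rule sum.cong)
    fix k assume "k \<in> {..<n}"
    show "min (D k) (m * e k) = min (D' k) (m * e k)"
    proof (cases "k = i")
      case True thus ?thesis using that lt Di by simp
    next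
      case False thus ?thesis using Do by simp
    qed
  qed simp
  have FDle: "F D m \<le> F D' m" for m
    unfolding F_def
  proof (rule sum_mono)
    fix k assume "k \<in> {..<n}"
    show "min (D k) (m * e k) \<le> min (D' k) (m * e k)"
    proof (cases "k = i")
      case True thus ?thesis using lt Di by simp
    next
      case False thus ?thesis using Do by simp
    qed
  qed
  have Fmono: "F X m \<le> F X l" if "m \<le> l" for X m l
    unfolding F_def by (rule F_mono[OF e_pos that])
  have Fstrict: "F X m < F X l" if "m < l" "k0 < n" "l * e k0 \<le> X k0" for X m l k0
    unfolding F_def by (rule F_strict[of n e m l k0 X, OF e_pos that])
  have sumD: "(\<Sum>k<n. D k) = (\<Sum>k<n. D' k) - di' + di"
  proof -
    have "(\<Sum>k<n. D k) = D i + (\<Sum>k\<in>{..<n}-{i}. D k)" using i by (simp add: sum.remove)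
    moreover have "(\<Sum>k<n. D' k) = D' i + (\<Sum>k\<in>{..<n}-{i}. D' k)" using i by (simp add: sum.remove)
    moreover have "(\<Sum>k\<in>{..<n}-{i}. D k) = (\<Sum>k\<in>{..<n}-{i}. D' k)" using Do by simp
    ultimately show ?thesis using Di by simp
  qed
  have goal: "MMF n e D i < MMF n e D' i \<or> (MMF n e D i = MMF n e D' i
      \<and> i \<in> MMF_saturated n e D \<and> i \<in> MMF_saturated n e D')"
    using C'
  proof
    assume A': "(\<Sum>k<n. D' k) < 1 \<and> (\<forall>k<n. MMF n e D' k = D' k) \<and> MMF_saturated n e D' = {}"
    have "MMF n e D i \<le> di" using C i Di by auto
    thus ?thesis using A' i Di lt by auto
  next
    assume "\<exists>l. (\<forall>k<n. MMF n e D' k = min (D' k) (l * e k)) \<and> (\<Sum>k<n. min (D' k) (l * e k)) = 1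
        \<and> MMF_saturated n e D' = {k. k < n \<and> l * e k \<le> D' k} \<and> (\<exists>k<n. l * e k \<le> D' k)"
    then obtain l' where a': "\<forall>k<n. MMF n e D' k = min (D' k) (l' * e k)" and f': "(\<Sum>k<n. min (D' k) (l' * e k)) = 1"
      and s': "MMF_saturated n e D' = {k. k < n \<and> l' * e k \<le> D' k}" and k': "\<exists>k<n. l' * e k \<le> D' k"
      by blast
    have f': "F D' l' = 1" using f' unfolding F_def .
    show ?thesis using C
    proof
      assume A: "(\<Sum>k<n. D k) < 1 \<and> (\<forall>k<n. MMF n e D k = D k) \<and> MMF_saturated n e D = {}"
      have "di < l' * e i"
      proof (rule ccontr)
        assume "\<not> di < l' * e i"
        hence le: "l' * e i \<le> di" by simp
        have "F D' l' \<le> (\<Sum>k<n. D k)" unfolding F_def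
        proof (rule sum_mono)
          fix k assume "k \<in> {..<n}"
          show "min (D' k) (l' * e k) \<le> D k"
          proof (cases "k = i")
            case True thus ?thesis using le Di by simp
          next
            case False thus ?thesis using Do by simp
          qed
        qed
        thus False using A f' by simp
      qed
      thus ?thesis using A a' i Di lt by auto
    next
      assume "\<exists>l. (\<forall>k<n. MMF n e D k = min (D k) (l * e k)) \<and> (\<Sum>k<n. min (D k) (l * e k)) = 1
        \<and> MMF_saturated n e D = {k. k < n \<and> l * e k \<le> D k} \<and> (\<exists>k<n. l * e k \<le> D k)"
      then obtain l where a: "\<forall>k<n. MMF n e D k = min (D k) (l * e k)" and f: "(\<Sum>k<n. min (D k) (l * e k)) = 1"
        and s: "MMF_saturated n e D = {k. k < n \<and> l * e k \<le> D k}" and k: "\<exists>k<n. l * e k \<le> D k"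
        by blast
      have f: "F D l = 1" using f unfolding F_def .
      show ?thesis
      proof (cases "l * e i \<le> di")
        case True
        have "\<not> l' < l"
        proof
          assume "l' < l"
          then have "F D l' < F D l" using k Fstrict by blast
          moreover have "l' * e i \<le> di" using \<open>l' < l\<close> True e_pos[OF i]
            by (smt (verit) mult_strict_right_mono)
          ultimately show False using FD f f' by simp
        qed
        moreover have "\<not> l < l'"
        proof
          assume "l < l'"
          then have "F D' l < F D' l'" using k' Fstrict by blast
          thus False using FDle[of l] f f' by simp
        qed
        ultimately have "l = l'" by simp
        thus ?thesis using True a a' s s' i Di lt by auto
      next
        case False
        have "di < l' * e i"
        proof (rule ccontr)
          assume "\<not> di < l' * e i"
          hence le: "l' * e i \<le> di" by simp
          hence "l' < l" using False e_pos[OF i] by (smt (verit) mult_right_mono)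
          then have "F D l' < F D l" using k Fstrict by blast
          thus False using FD[OF le] f f' by simp
        qed
        thus ?thesis using False a a' i Di lt by auto
      qed
    qed
  qed
  show ?thesis using goal unfolding D_def D'_def by auto
qed

end
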